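(* Let $f\colon [0,1]^2\to\mathbb{R}$ be a continuous function which is monotone, i.e. for every $t\in\mathbb{R}$ the level set $\{x\in[0,1]^2 : f(x)=t\}$ is connected. Let $S$ be the critical set of $f$ and $E^*$ the set defined in the context. Then $f$ has the relaxed Sard property, i.e. $f_\#(\mathbf{1}_S\mathcal{L}^2)\perp\mathcal{L}^1$, if and only if $f$ has the weak Sard property, i.e. $f_\#(\mathbf{1}_{S\cap E^*}\mathcal{L}^2)\perp\mathcal{L}^1$.
   Context: $\mathcal{L}^d$ denotes Lebesgue measure on $\mathbb{R}^d$, $\mathcal{H}^1$ the one-dimensional Hausdorff measure, $\mathbf{1}_A$ the indicator function of $A$, $f_\#\mu$ the pushforward (image) of a measure $\mu$ under $f$, and $\mu\perp\nu$ means $\mu$ and $\nu$ are mutually singular. The critical set $S$ of $f$ is the set of all points $x\in[0,1]^2$ at which $f$ is either not differentiable or has $\nabla f(x)=0$. For $t\in\mathbb{R}$ let $E_t=f^{-1}(t)$ and let $E_t^*$ be the union of all connected components of $E_t$ with strictly positive $\mathcal{H}^1$-measure; $E^*:=\bigcup_{t\in\mathbb{R}}E_t^*$ (a Borel set since $f$ is continuous). *)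

theory Defs
  imports "HOL-Analysis.Analysis"
begin

definition unit_square :: "(real \<times> real) set" where
  "unit_square = cbox (0,0) (1,1)"

text \<open>One-dimensional Hausdorff (outer) measure, normalised so that it agrees with
  length on segments: H^1(A) = sup_{d>0} inf { sum_i diam C_i : A \<subseteq> \<Union>_i C_i, diam C_i \<le> d }.
  Covering sets are required to be bounded (Isabelle's diameter of an unbounded set is 0).\<close>
definition hausdorff1 :: "'a::metric_space set \<Rightarrow> ennreal" where
  "hausdorff1 A =
     (SUP d\<in>{0<..}. INF C\<in>{C :: nat \<Rightarrow> 'a set. A \<subseteq> (\<Union>i. C i) \<and>
                                 (\<forall>i. bounded (C i) \<and> diameter (C i) \<le> d)}.
                     (\<Sum>i. ennreal (diameter (C i))))"

definition critical_set :: "(real \<times> real \<Rightarrow> real) \<Rightarrow> (real \<times> real) set" where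
  "critical_set f = {x \<in> unit_square. \<not> f differentiable (at x) \<or> (f has_derivative (\<lambda>h. 0)) (at x)}"

definition level_set :: "(real \<times> real \<Rightarrow> real) \<Rightarrow> real \<Rightarrow> (real \<times> real) set" where
  "level_set f t = {x \<in> unit_square. f x = t}"

definition level_set_star :: "(real \<times> real \<Rightarrow> real) \<Rightarrow> real \<Rightarrow> (real \<times> real) set" where
  "level_set_star f t = \<Union>{connected_component_set (level_set f t) x | x.
        x \<in> level_set f t \<and> hausdorff1 (connected_component_set (level_set f t) x) > 0}"

definition E_star :: "(real \<times> real \<Rightarrow> real) \<Rightarrow> (real \<times> real) set" where
  "E_star f = (\<Union>t. level_set_star f t)"

definition pushforward_restr :: "(real \<times> real \<Rightarrow> real) \<Rightarrow> (real \<times> real) set \<Rightarrow> real measure" where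
  "pushforward_restr f A = distr (density (restrict_space lebesgue unit_square) (indicator A)) borel f"

definition mutually_singular :: "'a measure \<Rightarrow> 'a measure \<Rightarrow> bool" where
  "mutually_singular M N \<longleftrightarrow> (\<exists>A\<in>sets M. emeasure M A = 0 \<and> emeasure N (space N - A) = 0)"

end

theory Submission
  imports Defs
begin

lemma cover_bound:
  fixes C :: "(real \<times> real) set" and D :: "nat \<Rightarrow> (real \<times> real) set"
  assumes conn: "connected C" and a: "a \<in> C" and b: "b \<in> C"
    and cov: "C \<subseteq> (\<Union>i. D i)" and bd: "\<And>i. bounded (D i)"
  shows "ennreal (dist a b) \<le> 2 * (\<Sum>i. ennreal (diameter (D i)))"
proof -
  define g where "g = (\<lambda>y. dist a y)"
  have cg: "connected (g ` C)"
    unfolding g_def by (intro connected_continuous_image conn continuous_intros)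
  have g0: "0 \<in> g ` C" "dist a b \<in> g ` C" using a b unfolding g_def by force+
  have sub1: "{0..dist a b} \<subseteq> g ` C"
  proof
    fix z assume "z \<in> {0..dist a b}"
    then show "z \<in> g ` C" by (intro connectedD_interval[OF cg g0]) auto
  qed
  define c where "c i = (SOME c. c \<in> D i)" for i
  define I where "I i = {g (c i) - diameter (D i) .. g (c i) + diameter (D i)}" for i
  have gI: "g ` D i \<subseteq> I i" for i
  proof
    fix z assume "z \<in> g ` D i"
    then obtain y where y: "y \<in> D i" "z = g y" by auto
    then have ci: "c i \<in> D i" unfolding c_def by (metis someI)
    have "dist y (c i) \<le> diameter (D i)" by (rule diameter_bounded_bound[OF bd y(1) ci])
    moreover have "\<bar>g y - g (c i)\<bar> \<le> dist y (c i)" unfolding g_def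
      using abs_dist_diff_le[of y a "c i"] by (simp add: dist_commute)
    ultimately show "z \<in> I i" using y unfolding I_def by auto
  qed
  have "{0..dist a b} \<subseteq> (\<Union>i. I i)"
  proof
    fix z assume "z \<in> {0..dist a b}"
    then obtain y where y: "y \<in> C" "z = g y" using sub1 by auto
    then obtain i where "y \<in> D i" using cov by auto
    then have "z \<in> I i" using gI[of i] y by auto
    then show "z \<in> (\<Union>i. I i)" by auto
  qed
  then have "emeasure lborel {0..dist a b} \<le> emeasure lborel (\<Union>i. I i)"
    by (intro emeasure_mono) (auto simp: I_def)
  also have "\<dots> \<le> (\<Sum>i. emeasure lborel (I i))"
    by (intro emeasure_subadditive_countably) (auto simp: I_def)
  also have "\<dots> = (\<Sum>i. 2 * ennreal (diameter (D i)))"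
  proof (rule suminf_cong)
    fix i
    have d0: "0 \<le> diameter (D i)" using diameter_ge_0[OF bd] .
    then have "emeasure lborel (I i) = ennreal (2 * diameter (D i))"
      unfolding I_def by simp
    also have "\<dots> = ennreal 2 * ennreal (diameter (D i))"
      by (rule ennreal_mult) (use d0 in auto)
    finally show "emeasure lborel (I i) = 2 * ennreal (diameter (D i))" by simp
  qed
  also have "\<dots> = 2 * (\<Sum>i. ennreal (diameter (D i)))" by simp
  finally show ?thesis by simp
qed

lemma H1_pos:
  fixes C :: "(real \<times> real) set"
  assumes conn: "connected C" and a: "a \<in> C" and b: "b \<in> C" and ab: "a \<noteq> b"
  shows "hausdorff1 C > 0"
proof -
  let ?S = "{D :: nat \<Rightarrow> (real \<times> real) set. C \<subseteq> (\<Union>i. D i) \<and>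
                                 (\<forall>i. bounded (D i) \<and> diameter (D i) \<le> 1)}"
  have "ennreal (dist a b) / 2 \<le> (INF D\<in>?S. (\<Sum>i. ennreal (diameter (D i))))"
  proof (rule INF_greatest)
    fix D assume "D \<in> ?S"
    then have "ennreal (dist a b) \<le> 2 * (\<Sum>i. ennreal (diameter (D i)))"
      by (intro cover_bound[OF conn a b]) auto
    then show "ennreal (dist a b) / 2 \<le> (\<Sum>i. ennreal (diameter (D i)))"
      by (intro divide_le_posI_ennreal) auto
  qed
  also have "\<dots> \<le> hausdorff1 C"
    unfolding hausdorff1_def by (rule SUP_upper2[of 1]) auto
  finally have "ennreal (dist a b) / 2 \<le> hausdorff1 C" .
  moreover have "0 < ennreal (dist a b) / 2" using ab by (simp add: ennreal_zero_less_divide)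
  ultimately show ?thesis by order
qed

lemma punct_conn:
  shows "connected (unit_square - {x})"
proof (rule connected_punctured_convex)
  show "convex unit_square" unfolding unit_square_def by (rule convex_box)
  have "interior unit_square \<noteq> {}" unfolding unit_square_def interior_cbox
    by (simp add: box_eq_empty inner_Pair_0 Basis_prod_def)
  then have "aff_dim unit_square = DIM(real \<times> real)" by (rule aff_dim_nonempty_interior)
  then show "aff_dim unit_square \<noteq> 1" by simp
qed

lemma subsingleton_finite:
  assumes "\<And>x z. x \<in> A \<Longrightarrow> z \<in> A \<Longrightarrow> x = z"
  shows "finite A"
proof (cases "A = {}")
  case False
  then obtain x where "x \<in> A" by auto
  then have "A \<subseteq> {x}" using assms by auto
  then show ?thesis by (rule finite_subset) simp
qed simp

lemma finite_null_lebesgue: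
  "finite (N :: 'a::euclidean_space set) \<Longrightarrow> N \<in> null_sets lebesgue"
  by (induct N rule: finite_induct) auto

lemma density_cong_AE':
  assumes "AE x in M. f x = g x"
  shows "density M f = density M g"
proof -
  have "(\<lambda>A. \<integral>\<^sup>+ x. f x * indicator A x \<partial>M) = (\<lambda>A. \<integral>\<^sup>+ x. g x * indicator A x \<partial>M)"
  proof
    fix A show "(\<integral>\<^sup>+ x. f x * indicator A x \<partial>M) = (\<integral>\<^sup>+ x. g x * indicator A x \<partial>M)"
      by (rule nn_integral_cong_AE) (use assms in eventually_elim, simp)
  qed
  then show ?thesis unfolding density_def by (rule arg_cong)
qed
theorem theorem1:
  fixes f :: "real \<times> real \<Rightarrow> real"
  assumes cont: "continuous_on unit_square f"
    and monotone: "\<And>t. connected {x \<in> unit_square. f x = t}"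
  shows "mutually_singular (pushforward_restr f (critical_set f)) lborel \<longleftrightarrow>
         mutually_singular (pushforward_restr f (critical_set f \<inter> E_star f)) lborel"
proof -
  define N where "N = {x \<in> unit_square. level_set f (f x) = {x}}"
  have claim1: "x \<in> N" if x: "x \<in> unit_square" "x \<notin> E_star f" for x
  proof -
    define L where "L = level_set f (f x)"
    have cL: "connected L" unfolding L_def level_set_def by (rule monotone)
    have xL: "x \<in> L" unfolding L_def level_set_def using x by auto
    have ccL: "connected_component_set L x = L" by (rule connected_component_eq_self[OF cL xL])
    have "L = {x}"
    proof (rule ccontr)
      assume "L \<noteq> {x}"
      then obtain y where y: "y \<in> L" "y \<noteq> x" using xL by auto
      have "hausdorff1 L > 0" using H1_pos[OF cL xL y(1)] y(2) by auto
      then have "L \<in> {connected_component_set L z | z. z \<in> L \<and> hausdorff1 (connected_component_set L z) > 0}"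
        using xL ccL by (metis (mono_tags, lifting) mem_Collect_eq)
      then have "L \<subseteq> level_set_star f (f x)"
        unfolding level_set_star_def L_def by (rule Union_upper)
      then have "x \<in> E_star f" unfolding E_star_def using xL by auto
      then show False using x by simp
    qed
    then show ?thesis unfolding N_def L_def using x by auto
  qed
  have ext: "(\<forall>y\<in>unit_square. f x \<le> f y) \<or> (\<forall>y\<in>unit_square. f y \<le> f x)" if xN: "x \<in> N" for x
  proof (rule ccontr)
    assume "\<not> ?thesis"
    then obtain y1 y2 where y: "y1 \<in> unit_square" "y2 \<in> unit_square" "f y1 < f x" "f x < f y2"
      by (auto simp: not_le)
    have lx: "level_set f (f x) = {x}" using xN unfolding N_def by auto
    have "y1 \<noteq> x" "y2 \<noteq> x" using y by auto
    have cc: "connected (f ` (unit_square - {x}))"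
      by (intro connected_continuous_image punct_conn continuous_on_subset[OF cont]) auto
    have i1: "f y1 \<in> f ` (unit_square - {x})" using y(1) \<open>y1 \<noteq> x\<close> by blast
    have i2: "f y2 \<in> f ` (unit_square - {x})" using y(2) \<open>y2 \<noteq> x\<close> by blast
    have "f x \<in> f ` (unit_square - {x})"
      by (rule connectedD_interval[OF cc i1 i2]) (use y(3,4) in linarith)+
    then obtain z where z0: "f x = f z" "z \<in> unit_square - {x}" by (rule imageE)
    then have z: "z \<in> unit_square" "z \<noteq> x" "f z = f x" by auto
    then have "z \<in> level_set f (f x)" unfolding level_set_def by auto
    then show False using lx z by auto
  qed
  have inj: "x = z" if "x \<in> N" "z \<in> N" "f x = f z" for x z
    using that unfolding N_def by auto
  have N1: "finite {x\<in>N. \<forall>y\<in>unit_square. f x \<le> f y}"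
  proof (rule subsingleton_finite)
    fix x z assume xz: "x \<in> {x\<in>N. \<forall>y\<in>unit_square. f x \<le> f y}" "z \<in> {x\<in>N. \<forall>y\<in>unit_square. f x \<le> f y}"
    have sq: "x \<in> unit_square" "z \<in> unit_square" using xz unfolding N_def by auto
    have "f x \<le> f z" "f z \<le> f x" using xz sq by auto
    then have "f x = f z" by linarith
    then show "x = z" by (rule inj[rotated 2]) (use xz in auto)
  qed
  have N2: "finite {x\<in>N. \<forall>y\<in>unit_square. f y \<le> f x}"
  proof (rule subsingleton_finite)
    fix x z assume xz: "x \<in> {x\<in>N. \<forall>y\<in>unit_square. f y \<le> f x}" "z \<in> {x\<in>N. \<forall>y\<in>unit_square. f y \<le> f x}"
    have sq: "x \<in> unit_square" "z \<in> unit_square" using xz unfolding N_def by auto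
    have "f z \<le> f x" "f x \<le> f z" using xz sq by auto
    then have "f x = f z" by linarith
    then show "x = z" by (rule inj[rotated 2]) (use xz in auto)
  qed
  have "N \<subseteq> {x\<in>N. \<forall>y\<in>unit_square. f x \<le> f y} \<union> {x\<in>N. \<forall>y\<in>unit_square. f y \<le> f x}"
    using ext by auto
  then have finN: "finite N" by (rule finite_subset) (use N1 N2 in simp)
  have sqm: "unit_square \<in> sets lebesgue" unfolding unit_square_def by simp
  have "AE x in lebesgue. x \<notin> N"
    by (rule AE_I'[OF finite_null_lebesgue[OF finN]]) auto
  then have "AE x in lebesgue. x \<in> unit_square \<longrightarrow>
      (indicator (critical_set f) x :: ennreal) = indicator (critical_set f \<inter> E_star f) x"
    by eventually_elim (use claim1 in \<open>auto simp: indicator_def\<close>)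
  then have AE: "AE x in restrict_space lebesgue unit_square.
      (indicator (critical_set f) x :: ennreal) = indicator (critical_set f \<inter> E_star f) x"
    by (subst AE_restrict_space_iff) (use sqm in auto)
  have dens: "density (restrict_space lebesgue unit_square) (indicator (critical_set f)) =
      density (restrict_space lebesgue unit_square) (indicator (critical_set f \<inter> E_star f))"
    by (rule density_cong_AE'[OF AE])
  show ?thesis unfolding pushforward_restr_def dens by (rule refl)
qed

end
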